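(* Let $q>2$ be a prime power and $k\ge 3$ an integer. Then there exists a linear AOA$(1,k-1,k,q)$.
   Context: An orthogonal array OA$(t,k,v)$ (with $1\le t\le k$) is a $v^t\times k$ array with entries from a set $X$ of size $v$ such that, for every choice of $t$ of its columns, each $t$-tuple in $X^t$ appears exactly once as a row of the corresponding $v^t\times t$ subarray. For integers $1\le s\le t\le k$, an augmented orthogonal array AOA$(s,t,k,v)$ is a $v^t\times(k+1)$ array $A$ such that: (1) the first $k$ columns of $A$ form an OA$(t,k,v)$ on a symbol set $X$ of size $v$; (2) the last column of $A$ has entries from a set $Y$ of size $v^{t-s}$; (3) for any choice of $s$ of the first $k$ columns, these $s$ columns together with the last column contain every $(s+1)$-tuple of $X^s\times Y$ exactly once as a row. For a prime power $q$, an AOA$(s,t,k,q)$ is linear if $X=\mathbb{F}_q$, $Y=\mathbb{F}_q^{t-s}$, and its set of rows, regarded as vectors in $\mathbb{F}_q^{k}\times\mathbb{F}_q^{t-s}=\mathbb{F}_q^{k+t-s}$, is an $\mathbb{F}_q$-linear subspace. *)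

theory Defs
  imports Main "HOL-Library.FuncSet"
begin

text \<open>Rows of an array with k+1 columns are encoded as lists: the first k entries
are the entries in the first k columns (symbols from the field), and the last column
(with entries in F_q^(t-s)) is encoded by the remaining t-s list entries, so a row is a
vector of F_q^(k+t-s). Since an OA has no repeated rows, the array is its set of rows.\<close>

definition AOA_rows :: "nat \<Rightarrow> nat \<Rightarrow> nat \<Rightarrow> ('a::finite) list set \<Rightarrow> bool" where
  "AOA_rows s t k R \<longleftrightarrow>
     1 \<le> s \<and> s \<le> t \<and> t \<le> k \<and>
     R \<subseteq> {r. length r = k + (t - s)} \<and>
     card R = card (UNIV :: 'a set) ^ t \<and>
     (\<forall>C. C \<subseteq> {..<k} \<and> card C = t \<longrightarrow>
        bij_betw (\<lambda>r. restrict (\<lambda>i. r ! i) C) R (PiE C (\<lambda>_. UNIV))) \<and>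
     (\<forall>C. C \<subseteq> {..<k} \<and> card C = s \<longrightarrow>
        bij_betw (\<lambda>r. (restrict (\<lambda>i. r ! i) C, drop k r)) R
          (PiE C (\<lambda>_. UNIV) \<times> {ys. length ys = t - s}))"

definition linear_AOA :: "nat \<Rightarrow> nat \<Rightarrow> nat \<Rightarrow> ('a::{finite,field}) list set \<Rightarrow> bool" where
  "linear_AOA s t k R \<longleftrightarrow>
     AOA_rows s t k R \<and>
     replicate (k + (t - s)) 0 \<in> R \<and>
     (\<forall>a\<in>R. \<forall>b\<in>R. map2 (+) a b \<in> R) \<and>
     (\<forall>c. \<forall>a\<in>R. map ((*) c) a \<in> R)"

end

theory Submission
  imports Defs
begin

locale aoac =
  fixes c :: "'a::{finite,field}" and n :: nat
  assumes c0: "c \<noteq> 0" and c1: "c + of_nat (n-1) \<noteq> 0" and n2: "n \<ge> 2"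
begin

definition R :: "'a list set" where
  "R = {r. length r = 2*n \<and> r!n = (\<Sum>j<n. r!j) \<and>
          (\<forall>j<n-1. r!(Suc n+j) = c*r!j - r!(n-1))}"

definition mk :: "(nat \<Rightarrow> 'a) \<Rightarrow> 'a list" where
  "mk x = map (\<lambda>i. if i<n then x i else if i=n then (\<Sum>j<n. x j)
                else c * x (i - Suc n) - x (n-1)) [0..<2*n]"

lemma mk_len: "length (mk x) = 2*n" by (simp add: mk_def)

lemma mk_nth_lt: "j < n \<Longrightarrow> mk x ! j = x j"
  using n2 by (simp add: mk_def nth_append)

lemma mk_nth_n: "mk x ! n = (\<Sum>j<n. x j)"
  using n2 by (simp add: mk_def)

lemma mk_nth_hi: "j < n-1 \<Longrightarrow> mk x ! (Suc n + j) = c * x j - x (n-1)"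
proof -
  assume j: "j < n-1"
  hence l: "Suc n + j < 2*n" by simp
  show ?thesis unfolding mk_def using nth_map_upt[of "Suc n + j" "2*n" 0] l by simp
qed

lemma mk_in: "mk x \<in> R"
proof -
  have "n - 1 < n" using n2 by simp
  hence "\<forall>j<n-1. mk x!(Suc n+j) = c*mk x!j - mk x!(n-1)"
    by (auto simp only: mk_nth_hi mk_nth_lt) 
  thus ?thesis unfolding R_def by (simp add: mk_len mk_nth_lt mk_nth_n del: add_Suc)
qed

lemma R_len: "r \<in> R \<Longrightarrow> length r = 2*n" by (simp add: R_def)

lemma R_x: "r \<in> R \<Longrightarrow> i < n-1 \<Longrightarrow> r!i = (r!(Suc n+i) + r!(n-1))/c"
  using c0 by (auto simp: R_def field_simps)

lemma R_eq:
  assumes "a \<in> R" "b \<in> R" "\<forall>j<n. a!j = b!j"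
  shows "a = b"
proof (rule nth_equalityI)
  show "length a = length b" using assms by (simp add: R_len)
  fix i assume "i < length a"
  hence i: "i < 2*n" using assms R_len by auto
  have an: "a!n = b!n" using assms(1,2,3) by (simp add: R_def)
  show "a!i = b!i"
  proof (cases "i < n")
    case True thus ?thesis using assms by auto
  next
    case False
    show ?thesis
    proof (cases "i = n")
      case True thus ?thesis using an by simp
    next
      case F2: False
      define j where "j = i - Suc n"
      have ij: "i = Suc n + j" "j < n - 1" using False F2 i by (auto simp: j_def)
      have "n - 1 < n" using n2 by simp
      thus ?thesis using assms ij by (simp add: R_def)
    qed
  qed
qed

lemma R_zero: "replicate (2*n) 0 \<in> R"
  using n2 by (simp add: R_def)

lemma R_add: "a \<in> R \<Longrightarrow> b \<in> R \<Longrightarrow> map2 (+) a b \<in> R"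
  unfolding R_def using n2
  by (auto simp: sum.distrib algebra_simps)

lemma R_mult: "a \<in> R \<Longrightarrow> map ((*) d) a \<in> R"
proof -
  assume a: "a \<in> R"
  have "\<forall>j<n-1. map ((*) d) a!(Suc n+j) = c*map ((*) d) a!j - map ((*) d) a!(n-1)"
  proof (intro allI impI)
    fix j assume j: "j < n-1"
    hence "a!(Suc n+j) = c*a!j - a!(n-1)" using a by (simp add: R_def)
    moreover have "Suc n + j < length a" "j < length a" "n - 1 < length a"
      using j a n2 by (auto simp: R_def)
    ultimately show "map ((*) d) a!(Suc n+j) = c*map ((*) d) a!j - map ((*) d) a!(n-1)"
      by (simp only: nth_map) (simp add: algebra_simps)
  qed
  thus ?thesis using a n2 unfolding R_def by (auto simp: sum_distrib_left)
qed


lemma sum_remove_m: "m < n \<Longrightarrow> (\<Sum>j<n. f j) = f m + (\<Sum>j\<in>{..<n}-{m}. f j)"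
  by (rule sum.remove) auto

lemma bij_full:
  assumes C: "C \<subseteq> {..<Suc n}" "card C = n"
  shows "bij_betw (\<lambda>r. restrict (\<lambda>i. r!i) C) R (PiE C (\<lambda>_. UNIV))"
proof -
  have "card ({..<Suc n} - C) = 1" using C by (simp add: card_Diff_subset finite_subset)
  then obtain m where m: "{..<Suc n} - C = {m}" by (meson card_1_singletonE)
  hence mlt: "m < Suc n" and Ceq: "C = {..<Suc n} - {m}" using C by auto
  show ?thesis unfolding bij_betw_def
  proof
    show "inj_on (\<lambda>r. restrict (\<lambda>i. r!i) C) R"
    proof (rule inj_onI)
      fix a b assume a: "a \<in> R" and b: "b \<in> R"
        and e: "restrict (\<lambda>i. a!i) C = restrict (\<lambda>i. b!i) C"
      have eC: "\<And>j. j \<in> C \<Longrightarrow> a!j = b!j" using e by (metis restrict_apply')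
      have "\<forall>j<n. a!j = b!j"
      proof (cases "m = n")
        case True thus ?thesis using eC Ceq by auto
      next
        case False
        hence mn: "m < n" using mlt by simp
        have s: "(\<Sum>j\<in>{..<n}-{m}. a!j) = (\<Sum>j\<in>{..<n}-{m}. b!j)"
          using eC Ceq by (intro sum.cong) auto
        have "a!n = b!n" using eC Ceq mn by auto
        hence "a!m = b!m" using a b sum_remove_m[OF mn, of "\<lambda>j. a!j"]
            sum_remove_m[OF mn, of "\<lambda>j. b!j"] s by (simp add: R_def)
        thus ?thesis using eC Ceq by (metis Diff_iff lessThan_iff less_SucI singletonD)
      qed
      thus "a = b" using R_eq a b by blast
    qed
  next
    show "(\<lambda>r. restrict (\<lambda>i. r!i) C) ` R = PiE C (\<lambda>_. UNIV)"
    proof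
      show "(\<lambda>r. restrict (\<lambda>i. r!i) C) ` R \<subseteq> PiE C (\<lambda>_. UNIV)"
        by (intro image_subsetI) (simp add: restrict_PiE_iff)
    next
      show "PiE C (\<lambda>_. UNIV) \<subseteq> (\<lambda>r. restrict (\<lambda>i. r!i) C) ` R"
      proof
        fix g :: "nat \<Rightarrow> 'a" assume g: "g \<in> PiE C (\<lambda>_. UNIV)"
        define x where "x = (\<lambda>j. if j = m \<and> m < n then g n - (\<Sum>l\<in>{..<n}-{m}. g l) else g j)"
        have "restrict (\<lambda>i. mk x!i) C = g"
        proof (rule ext)
          fix j
          show "restrict (\<lambda>i. mk x!i) C j = g j"
          proof (cases "j \<in> C")
            case False
            have "g j = undefined" using g False by (rule PiE_arb)
            thus ?thesis using False by simp
          next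
            case True
            hence jm: "j \<noteq> m" "j < Suc n" using Ceq by auto
            show ?thesis
            proof (cases "j < n")
              case True thus ?thesis using jm \<open>j \<in> C\<close> by (simp add: mk_nth_lt x_def)
            next
              case False
              hence jn: "j = n" using jm by simp
              hence mn: "m < n" using jm mlt by simp
              have e1: "(\<Sum>l\<in>{..<n}-{m}. x l) = (\<Sum>l\<in>{..<n}-{m}. g l)"
                by (intro sum.cong) (auto simp: x_def)
              have e2: "x m = g n - (\<Sum>l\<in>{..<n}-{m}. g l)" using mn by (simp add: x_def)
              have "mk x ! n = g n"
                using mk_nth_n[of x] sum_remove_m[OF mn, of x] e1 e2 by (metis diff_add_cancel)
              thus ?thesis using jn \<open>j \<in> C\<close> by simp
            qed
          qed
        qed
        thus "g \<in> (\<lambda>r. restrict (\<lambda>i. r!i) C) ` R" using mk_in[of x] by (metis image_eqI)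
      qed
    qed
  qed
qed


lemma R_coln:
  assumes r: "r \<in> R"
  shows "c * r!n = (\<Sum>j<n-1. r!(Suc n+j)) + r!(n-1) * (of_nat (n-1) + c)"
proof -
  have nn: "n = Suc (n-1)" using n2 by simp
  have s0: "r!n = (\<Sum>j<n. r!j)" using r by (simp add: R_def)
  have s1: "(\<Sum>j<n. r!j) = (\<Sum>j<n-1. r!j) + r!(n-1)"
    by (subst nn) (simp only: sum.lessThan_Suc diff_Suc_1)
  have s2: "(\<Sum>j<n-1. r!j) = (\<Sum>j<n-1. (r!(Suc n+j) + r!(n-1))/c)"
  proof (rule sum.cong)
    fix j assume "j \<in> {..<n-1}"
    thus "r!j = (r!(Suc n+j) + r!(n-1))/c" using R_x[OF r] by simp
  qed simp
  have s3: "(\<Sum>j<n-1. (r!(Suc n+j) + r!(n-1))/c) = ((\<Sum>j<n-1. r!(Suc n+j)) + of_nat (n-1) * r!(n-1))/c"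
    by (simp only: sum_divide_distrib[symmetric] sum.distrib sum_constant card_lessThan of_nat_mult)
  have "r!n = ((\<Sum>j<n-1. r!(Suc n+j)) + of_nat (n-1) * r!(n-1))/c + r!(n-1)"
    using s0 s1 s2 s3 by simp
  thus ?thesis using c0 by (simp add: field_simps)
qed

lemma R_y: "r \<in> R \<Longrightarrow> j < n-1 \<Longrightarrow> drop (Suc n) r ! j = r!(Suc n+j)"
  by (simp add: R_len)

lemma bij_single:
  assumes i: "i < Suc n"
  shows "bij_betw (\<lambda>r. (restrict (\<lambda>j. r!j) {i}, drop (Suc n) r)) R
           (PiE {i} (\<lambda>_. UNIV) \<times> {ys. length ys = n-1})"
  unfolding bij_betw_def
proof
  show "inj_on (\<lambda>r. (restrict (\<lambda>j. r!j) {i}, drop (Suc n) r)) R"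
  proof (rule inj_onI)
    fix a b assume a: "a \<in> R" and b: "b \<in> R"
      and e: "(restrict (\<lambda>j. a!j) {i}, drop (Suc n) a) = (restrict (\<lambda>j. b!j) {i}, drop (Suc n) b)"
    have ai: "a!i = b!i" using e by (metis prod.inject restrict_apply' singletonI)
    have dd: "drop (Suc n) a = drop (Suc n) b" using e by simp
    have y: "\<And>j. j < n-1 \<Longrightarrow> a!(Suc n+j) = b!(Suc n+j)"
      using R_y[OF a] R_y[OF b] dd by metis
    have t: "a!(n-1) = b!(n-1)"
    proof (cases "i < n-1")
      case True
      hence "(a!(Suc n+i) + a!(n-1))/c = (b!(Suc n+i) + b!(n-1))/c"
        using R_x[OF a] R_x[OF b] ai by metis
      thus ?thesis using y[OF True] c0 by (simp add: divide_cancel_right)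
    next
      case False
      show ?thesis
      proof (cases "i = n-1")
        case True thus ?thesis using ai by simp
      next
        case F2: False
        hence "i = n" using False i by simp
        hence "(\<Sum>j<n-1. a!(Suc n+j)) + a!(n-1) * (of_nat (n-1) + c)
             = (\<Sum>j<n-1. b!(Suc n+j)) + b!(n-1) * (of_nat (n-1) + c)"
          using R_coln[OF a] R_coln[OF b] ai by metis
        moreover have "(\<Sum>j<n-1. a!(Suc n+j)) = (\<Sum>j<n-1. b!(Suc n+j))"
          using y by (intro sum.cong) auto
        ultimately show ?thesis using c1 by (simp add: add.commute)
      qed
    qed
    have "\<forall>j<n. a!j = b!j"
    proof (intro allI impI)
      fix j assume "j < n"
      show "a!j = b!j"
      proof (cases "j < n-1")
        case True thus ?thesis using R_x[OF a True] R_x[OF b True] y[OF True] t by simp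
      next
        case False
        hence "j = n-1" using \<open>j < n\<close> by simp
        thus ?thesis using t by simp
      qed
    qed
    thus "a = b" using R_eq a b by blast
  qed
next
  show "(\<lambda>r. (restrict (\<lambda>j. r!j) {i}, drop (Suc n) r)) ` R = PiE {i} (\<lambda>_. UNIV) \<times> {ys. length ys = n-1}"
  proof
    show "(\<lambda>r. (restrict (\<lambda>j. r!j) {i}, drop (Suc n) r)) ` R \<subseteq> PiE {i} (\<lambda>_. UNIV) \<times> {ys. length ys = n-1}"
      by (intro image_subsetI) (simp add: restrict_PiE_iff R_len)
  next
    show "PiE {i} (\<lambda>_. UNIV) \<times> {ys. length ys = n-1} \<subseteq> (\<lambda>r. (restrict (\<lambda>j. r!j) {i}, drop (Suc n) r)) ` R"
    proof
      fix p :: "(nat \<Rightarrow> 'a) \<times> 'a list"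
      assume p: "p \<in> PiE {i} (\<lambda>_. UNIV) \<times> {ys. length ys = n-1}"
      obtain g ys where pg: "p = (g, ys)" by (cases p)
      have g: "g \<in> PiE {i} (\<lambda>_. UNIV)" and ys: "length ys = n-1" using p pg by auto
      define z where "z = g i"
      define t where "t = (if i < n-1 then c*z - ys!i else if i = n-1 then z
                           else (c*z - (\<Sum>j<n-1. ys!j))/(of_nat (n-1)+c))"
      define x where "x = (\<lambda>j. if j < n-1 then (ys!j + t)/c else t)"
      define r where "r = mk x"
      have rR: "r \<in> R" unfolding r_def by (rule mk_in)
      have xn: "x (n-1) = t" by (simp add: x_def)
      have ry: "r!(Suc n+j) = ys!j" if j: "j < n-1" for j
      proof -
        have "r!(Suc n+j) = c * x j - x (n-1)" unfolding r_def by (rule mk_nth_hi[OF j])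
        also have "x j = (ys!j + t)/c" using j by (simp add: x_def)
        finally show ?thesis using c0 xn by simp
      qed
      have dr: "drop (Suc n) r = ys"
      proof (rule nth_equalityI)
        show "length (drop (Suc n) r) = length ys" using rR ys R_len by simp
        fix j assume "j < length (drop (Suc n) r)"
        hence "j < n-1" using rR R_len by simp
        thus "drop (Suc n) r ! j = ys ! j" using R_y[OF rR] ry by simp
      qed
      have ri: "r!i = z"
      proof (cases "i < n-1")
        case True
        have "i < n" using True by simp
        hence "r!i = x i" by (simp add: r_def mk_nth_lt)
        thus ?thesis using True c0 by (simp add: x_def t_def)
      next
        case False
        show ?thesis
        proof (cases "i = n-1")
          case True
          hence "i < n" using n2 by simp
          hence "r!i = x i" by (simp add: r_def mk_nth_lt)
          thus ?thesis using True by (simp add: x_def t_def)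
        next
          case F2: False
          hence iN: "i = n" using False i by simp
          have rt: "r!(n-1) = t" using mk_nth_lt[of "n-1" x] n2 xn r_def by simp
          have sy: "(\<Sum>j<n-1. r!(Suc n+j)) = (\<Sum>j<n-1. ys!j)"
          proof (rule sum.cong)
            fix j assume "j \<in> {..<n-1}"
            thus "r!(Suc n+j) = ys!j" using ry[of j] by simp
          qed simp
          have "c * r!n = (\<Sum>j<n-1. ys!j) + t * (of_nat (n-1) + c)"
            using R_coln[OF rR] unfolding rt sy .
          also have "t * (of_nat (n-1) + c) = c*z - (\<Sum>j<n-1. ys!j)"
          proof -
            have "\<not> i < n-1" "i \<noteq> n-1" using iN n2 by auto
            hence tt: "t = (c*z - (\<Sum>j<n-1. ys!j))/(of_nat (n-1)+c)"
              unfolding t_def by simp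
            show ?thesis unfolding tt using c1 by (simp add: add.commute del: of_nat_diff)
          qed
          finally have "c * r!n = c * z" by simp
          thus ?thesis using iN c0 by simp
        qed
      qed
      have "restrict (\<lambda>j. r!j) {i} = g"
      proof (rule ext)
        fix j show "restrict (\<lambda>j. r!j) {i} j = g j"
        proof (cases "j = i")
          case True thus ?thesis using ri by (simp add: z_def)
        next
          case False
          have "g j = undefined" using g False by (intro PiE_arb) auto
          thus ?thesis using False by simp
        qed
      qed
      hence "p = (\<lambda>r. (restrict (\<lambda>j. r!j) {i}, drop (Suc n) r)) r" using pg dr by simp
      thus "p \<in> (\<lambda>r. (restrict (\<lambda>j. r!j) {i}, drop (Suc n) r)) ` R" using rR by (rule image_eqI)
    qed
  qed
qed

end


theorem theorem3p6:
  fixes k :: nat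
  assumes "card (UNIV :: ('a::{finite,field}) set) > 2"
    and "k \<ge> 3"
  shows "\<exists>R :: 'a list set. linear_AOA 1 (k - 1) k R"
proof -
  define n where "n = k - 1"
  have kn: "k = Suc n" "n \<ge> 2" using assms(2) by (auto simp: n_def)
  have "\<not> UNIV \<subseteq> {0, - of_nat (n-1) :: 'a}"
  proof
    assume "UNIV \<subseteq> {0, - of_nat (n-1) :: 'a}"
    hence "card (UNIV :: 'a set) \<le> card {0, - of_nat (n-1) :: 'a}" by (intro card_mono) auto
    also have "\<dots> \<le> 2" by (rule card_insert_le_m1) auto
    finally show False using assms(1) by simp
  qed
  then obtain c :: 'a where c': "c \<notin> {0, - of_nat (n-1)}" by blast
  have c: "c \<noteq> 0" "c + of_nat (n-1) \<noteq> 0"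
  proof -
    show "c \<noteq> 0" using c' by blast
    show "c + of_nat (n-1) \<noteq> 0"
    proof
      assume "c + of_nat (n-1) = 0"
      hence "c = - of_nat (n-1)" by (simp only: eq_neg_iff_add_eq_0)
      thus False using c' by blast
    qed
  qed
  interpret aoac c n by (rule aoac.intro) (rule c(1), rule c(2), rule kn(2))
  have len: "k + (k - 1 - 1) = 2*n" using kn by simp
  have t: "k - 1 = n" using kn by auto
  have len2: "k + (n - 1) = 2*n" using kn by simp
  have "AOA_rows 1 (k-1) k R"
    unfolding AOA_rows_def t len2
  proof (intro conjI allI impI)
    show "1 \<le> (1::nat)" "1 \<le> n" "n \<le> k" using kn by auto
    show "R \<subseteq> {r. length r = 2*n}" using R_len by auto
    have "bij_betw (\<lambda>r. restrict (\<lambda>i. r!i) {..<n}) R (PiE {..<n} (\<lambda>_. UNIV :: 'a set))"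
      by (rule bij_full) auto
    hence "card R = card (PiE {..<n} (\<lambda>_. UNIV :: 'a set))" by (rule bij_betw_same_card)
    thus "card R = card (UNIV :: 'a set) ^ n" by (simp add: card_PiE)
  next
    fix C assume "C \<subseteq> {..<k} \<and> card C = n"
    thus "bij_betw (\<lambda>r. restrict (\<lambda>i. r!i) C) R (PiE C (\<lambda>_. UNIV))"
      using bij_full kn by auto
  next
    fix C assume C: "C \<subseteq> {..<k} \<and> card C = 1"
    then obtain i where i: "C = {i}" by (meson card_1_singletonE)
    hence "i < Suc n" using C kn by auto
    thus "bij_betw (\<lambda>r. (restrict (\<lambda>i. r!i) C, drop k r)) R
          (PiE C (\<lambda>_. UNIV) \<times> {ys. length ys = n - 1})"
      using bij_single i kn by simp
  qed
  moreover have "replicate (k + (k - 1 - 1)) 0 \<in> R" unfolding len by (rule R_zero)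
  ultimately have "linear_AOA 1 (k-1) k R"
    unfolding linear_AOA_def using R_add R_mult by blast
  thus ?thesis by blast
qed

end
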